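(* Let $p, n_s, q$ be positive integers, and let $\mathbf{Y} \in \mathbb{R}^{p \times q}$, $\mathbf{Z} \in \mathbb{R}^{n_s \times q}$. Suppose the pair $(\mathbf{B}, \mathbf{D})$ with $\mathbf{B} \in \mathbb{R}^{p \times n_s}$, $\mathbf{D} \in \mathbb{R}^{p \times p}$ satisfies $$(\mathbf{I} - \mathbf{D})\mathbf{Y} = \mathbf{B}\mathbf{Z}, \qquad (\mathbf{B}~\mathbf{D})\mathbf{1} = \mathbf{1}, \qquad \mathbf{B} \geq \mathbf{0},~ \mathbf{D} \geq \mathbf{0}$$ (such a pair exists when $\mathbf{Y},\mathbf{Z}$ are noiseless steady-state data generated by a true pair $(\overline{\mathbf B},\overline{\mathbf D})$, namely that pair itself). Let $\boldsymbol{\Lambda} \in \mathbb{R}^{p\times p}$ be any non-negative diagonal matrix, and define $(\mathbf{B}', \mathbf{D}')$ by $$\mathbf{B}' = \boldsymbol{\Lambda}\mathbf{B}, \qquad \mathrm{off}(\mathbf{D}') = \boldsymbol{\Lambda}\,\mathrm{off}(\mathbf{D}), \qquad \mathrm{diag}(\mathbf{D}') = \mathbf{1} - \boldsymbol{\Lambda}\big(\mathbf{B}\mathbf{1} + \mathrm{off}(\mathbf{D})\mathbf{1}\big),$$ and assume $\boldsymbol{\Lambda}$ is such that $\mathrm{diag}(\mathbf{D}') \geq \mathbf{0}$. Then $(\mathbf{B}', \mathbf{D}')$ also satisfies $(\mathbf{I} - \mathbf{D}')\mathbf{Y} = \mathbf{B}'\mathbf{Z}$, $(\mathbf{B}'~\mathbf{D}')\mathbf{1}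 = \mathbf{1}$, $\mathbf{B}' \geq \mathbf{0}$, $\mathbf{D}' \geq \mathbf{0}$.
   Context: $\mathbf{1}$ denotes the all-ones vector of appropriate dimension; inequalities between matrices are entrywise. For a square matrix $\mathbf{D}$, $\mathrm{off}(\mathbf{D})$ denotes the square matrix obtained from $\mathbf{D}$ by setting its diagonal entries to zero, and $\mathrm{diag}(\mathbf{D})$ denotes the vector of its diagonal entries. $(\mathbf{B}~\mathbf{D})$ denotes the horizontal concatenation of $\mathbf{B}$ and $\mathbf{D}$. *)

theory Defs
  imports "HOL-Analysis.Analysis"
begin

definition off :: "real^'n^'n \<Rightarrow> real^'n^'n" where
  "off D = (\<chi> i j. if i = j then 0 else D $ i $ j)"

definition diagv :: "real^'n^'n \<Rightarrow> real^'n" where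
  "diagv D = (\<chi> i. D $ i $ i)"

text \<open>(B D) 1, the horizontal concatenation applied to the all-ones vector.\<close>
definition hcat_ones :: "real^'s^'p \<Rightarrow> real^'p^'p \<Rightarrow> real^'p" where
  "hcat_ones B D = B *v (1::real^'s) + D *v (1::real^'p)"

definition nonneg_mat :: "real^'n^'m \<Rightarrow> bool" where
  "nonneg_mat A \<longleftrightarrow> (\<forall>i j. 0 \<le> A $ i $ j)"

definition nonneg_vec :: "real^'n \<Rightarrow> bool" where
  "nonneg_vec v \<longleftrightarrow> (\<forall>i. 0 \<le> v $ i)"

end

theory Submission
  imports Defs
begin

lemma diag_mult:
  fixes Lam :: "real^'p^'p" and A :: "real^'n^'p"
  assumes "\<forall>i j. i \<noteq> j \<longrightarrow> Lam $ i $ j = 0"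
  shows "(Lam ** A) $ i $ j = Lam $ i $ i * A $ i $ j"
proof -
  have "(Lam ** A) $ i $ j = (\<Sum>k\<in>UNIV. Lam $ i $ k * A $ k $ j)"
    by (simp add: matrix_matrix_mult_def)
  also have "\<dots> = (\<Sum>k\<in>UNIV. if k = i then Lam $ i $ i * A $ i $ j else 0)"
    using assms by (intro sum.cong) auto
  also have "\<dots> = Lam $ i $ i * A $ i $ j" by simp
  finally show ?thesis .
qed

lemma diag_mulv:
  fixes Lam :: "real^'p^'p"
  assumes "\<forall>i j. i \<noteq> j \<longrightarrow> Lam $ i $ j = 0"
  shows "(Lam *v v) $ i = Lam $ i $ i * v $ i"
proof -
  have "(Lam *v v) $ i = (\<Sum>k\<in>UNIV. Lam $ i $ k * v $ k)"
    by (simp add: matrix_vector_mult_def)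
  also have "\<dots> = (\<Sum>k\<in>UNIV. if k = i then Lam $ i $ i * v $ i else 0)"
    using assms by (intro sum.cong) auto
  also have "\<dots> = Lam $ i $ i * v $ i" by simp
  finally show ?thesis .
qed

theorem lemma1:
  fixes Y :: "real^'q^'p" and Z :: "real^'q^'s"
    and B :: "real^'s^'p" and D :: "real^'p^'p"
    and Lam :: "real^'p^'p"
    and B' :: "real^'s^'p" and D' :: "real^'p^'p"
  assumes eq: "(mat 1 - D) ** Y = B ** Z"
    and row: "hcat_ones B D = 1"
    and Bnn: "nonneg_mat B" and Dnn: "nonneg_mat D"
    and Lam_diag: "\<forall>i j. i \<noteq> j \<longrightarrow> Lam $ i $ j = 0"
    and Lam_nn: "\<forall>i. 0 \<le> Lam $ i $ i"
    and B'_def: "B' = Lam ** B"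
    and D'_off: "off D' = Lam ** off D"
    and D'_diag: "diagv D' = 1 - Lam *v (B *v 1 + off D *v 1)"
    and D'_diag_nn: "nonneg_vec (diagv D')"
  shows "(mat 1 - D') ** Y = B' ** Z \<and> hcat_ones B' D' = 1
         \<and> nonneg_mat B' \<and> nonneg_mat D'"
proof -
  have rowi: "(B *v 1) $ i + (D *v 1) $ i = 1" for i
    using row by (simp add: hcat_ones_def vec_eq_iff)
  have offv: "(off D *v 1) $ i = (D *v 1) $ i - D $ i $ i" for i
  proof -
    have "(off D *v 1) $ i = (\<Sum>k\<in>UNIV. (if i = k then 0 else D $ i $ k))"
      by (simp add: matrix_vector_mult_def off_def)
    also have "\<dots> = (\<Sum>k\<in>UNIV. D $ i $ k) - D $ i $ i"
    proof -
      have "(\<Sum>k\<in>UNIV. D $ i $ k) = (\<Sum>k\<in>UNIV. (if i = k then 0 else D $ i $ k)) + D $ i $ i"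
        by (simp add: sum.If_cases sum.remove[of UNIV i] Compl_eq_Diff_UNIV[symmetric] Collect_neg_eq[symmetric])
      then show ?thesis by simp
    qed
    also have "\<dots> = (D *v 1) $ i - D $ i $ i"
      by (simp add: matrix_vector_mult_def)
    finally show ?thesis .
  qed
  have D'eq: "D' = mat 1 - Lam ** (mat 1 - D)"
  proof (rule vec_eq_iff[THEN iffD2, OF allI], rule vec_eq_iff[THEN iffD2, OF allI])
    fix i j
    show "D' $ i $ j = (mat 1 - Lam ** (mat 1 - D)) $ i $ j"
    proof (cases "i = j")
      case True
      have "D' $ i $ i = (diagv D') $ i" by (simp add: diagv_def)
      also have "\<dots> = 1 - Lam $ i $ i * ((B *v 1) $ i + (off D *v 1) $ i)"
        using D'_diag diag_mulv[OF Lam_diag] by simp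
      also have "\<dots> = 1 - Lam $ i $ i * (1 - D $ i $ i)"
        using rowi[of i] offv[of i] by simp
      finally show ?thesis using True
        by (simp add: diag_mult[OF Lam_diag] mat_def)
    next
      case False
      have "D' $ i $ j = off D' $ i $ j" using False by (simp add: off_def)
      also have "\<dots> = Lam $ i $ i * D $ i $ j"
        using D'_off False by (simp add: diag_mult[OF Lam_diag] off_def)
      finally show ?thesis using False
        by (simp add: diag_mult[OF Lam_diag] mat_def)
    qed
  qed
  have "mat 1 - D' = Lam ** (mat 1 - D)" using D'eq by simp
  hence e1: "(mat 1 - D') ** Y = B' ** Z"
    using eq B'_def by (metis matrix_mul_assoc)
  have e2: "hcat_ones B' D' = 1"
  proof (rule vec_eq_iff[THEN iffD2, OF allI])
    fix i
    have "(D' *v 1) $ i = 1 - Lam $ i $ i * (1 - (D *v 1) $ i)"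
    proof -
      have "D' *v 1 = 1 - Lam *v (1 - D *v 1)"
        by (simp add: D'eq matrix_vector_mult_diff_rdistrib matrix_vector_mul_assoc[symmetric]
            matrix_vector_mult_diff_distrib)
      then show ?thesis by (simp add: diag_mulv[OF Lam_diag])
    qed
    moreover have "(B' *v 1) $ i = Lam $ i $ i * (B *v 1) $ i"
      by (simp add: B'_def matrix_vector_mul_assoc[symmetric] diag_mulv[OF Lam_diag])
    moreover have "(B *v 1) $ i = 1 - (D *v 1) $ i" using rowi[of i] by simp
    ultimately show "hcat_ones B' D' $ i = 1 $ i"
      by (simp add: hcat_ones_def algebra_simps)
  qed
  have e3: "nonneg_mat B'"
    using Bnn Lam_nn by (simp add: nonneg_mat_def B'_def diag_mult[OF Lam_diag])
  have e4: "nonneg_mat D'"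
    unfolding nonneg_mat_def
  proof (intro allI)
    fix i j
    show "0 \<le> D' $ i $ j"
    proof (cases "i = j")
      case True
      then show ?thesis using D'_diag_nn by (simp add: nonneg_vec_def diagv_def)
    next
      case False
      then show ?thesis using Dnn Lam_nn
        by (simp add: D'eq mat_def diag_mult[OF Lam_diag] nonneg_mat_def)
    qed
  qed
  show ?thesis using e1 e2 e3 e4 by blast
qed

end
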